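(* Let $u$ be a coherent utility on $L^0$ whose determining set $\mathcal{D}$ is $L^1$-closed and uniformly integrable (as a set of densities), and let $W\in L^1_s(\mathcal{D})$. Then $\mathcal{X}_\mathcal{D}(W)\neq\emptyset$.
   Context: Let $(\Omega,\mathcal{F},\mathsf{P})$ be a probability space, $L^0$ the space of all real random variables, and $\mathcal{P}$ the set of probability measures on $\mathcal{F}$ absolutely continuous with respect to $\mathsf{P}$; measures $\mathsf{Q}\in\mathcal{P}$ are identified with their densities $d\mathsf{Q}/d\mathsf{P}\in L^1(\mathsf{P})$. For $\mathsf{Q}\in\mathcal{P}$ and $X\in L^0$, $\mathsf{E}_\mathsf{Q}X:=\mathsf{E}_\mathsf{Q}X^+-\mathsf{E}_\mathsf{Q}X^-$ with the convention $\infty-\infty=-\infty$. A coherent utility on $L^0$ is a map $u:L^0\to[-\infty,\infty]$ of the form $u(X)=\inf_{\mathsf{Q}\in\mathcal{D}}\mathsf{E}_\mathsf{Q}X$ for a nonempty $\mathcal{D}\subseteq\mathcal{P}$; its determining set is the largest such set, $\{\mathsf{Q}\in\mathcal{P}:\mathsf{E}_\mathsf{Q}X\ge u(X)\ \forall X\in L^0\}$. $L^1_s(\mathcal{D})=\{X\in L^0:\lim_{n\to\infty}\sup_{\mathsf{Q}\in\mathcal{D}}\mathsf{E}_\mathsf{Q}|X|I(|X|>n)=0\}$. The set of extreme measures for $W$ is $\mathcal{X}_\mathcal{D}(W)=\{\mathsf{Q}\in\mathcal{D}:\mathsf{E}_\mathsf{Q}W=u(W)\in(-\infty,\infty)\}$.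 *)

theory Defs
  imports "HOL-Probability.Probability"
begin

text \<open>Densities dQ/dP of probability measures Q absolutely continuous w.r.t. P = M.\<close>
definition densities :: "'a measure \<Rightarrow> ('a \<Rightarrow> real) set" where
  "densities M = {q \<in> borel_measurable M. (\<forall>x\<in>space M. 0 \<le> q x) \<and>
                     integrable M q \<and> (\<integral>x. q x \<partial>M) = 1}"

text \<open>E_Q X = E_Q X^+ - E_Q X^-, with the convention \<infinity> - \<infinity> = -\<infinity>.\<close>
definition EQ :: "'a measure \<Rightarrow> ('a \<Rightarrow> real) \<Rightarrow> ('a \<Rightarrow> real) \<Rightarrow> ereal" where
  "EQ M q X = (let a = enn2ereal (\<integral>\<^sup>+x. ennreal (q x * max (X x) 0) \<partial>M);
                   b = enn2ereal (\<integral>\<^sup>+x. ennreal (q x * max (- X x) 0) \<partial>M)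
               in if a = \<infinity> \<and> b = \<infinity> then - \<infinity> else a - b)"

text \<open>Coherent utility on L^0 (the random variables = Borel measurable real functions).\<close>
definition coherent_utility :: "'a measure \<Rightarrow> (('a \<Rightarrow> real) \<Rightarrow> ereal) \<Rightarrow> bool" where
  "coherent_utility M u \<longleftrightarrow> (\<exists>D. D \<subseteq> densities M \<and> D \<noteq> {} \<and>
      (\<forall>X\<in>borel_measurable M. u X = (INF q\<in>D. EQ M q X)))"

text \<open>Determining set: the largest set of representing measures.\<close>
definition determining_set :: "'a measure \<Rightarrow> (('a \<Rightarrow> real) \<Rightarrow> ereal) \<Rightarrow> ('a \<Rightarrow> real) set" where
  "determining_set M u = {q \<in> densities M. \<forall>X\<in>borel_measurable M. EQ M q X \<ge> u X}"

text \<open>D is closed in L^1 (densities identified up to P-a.e. equality).\<close>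
definition L1_closed :: "'a measure \<Rightarrow> ('a \<Rightarrow> real) set \<Rightarrow> bool" where
  "L1_closed M D \<longleftrightarrow> (\<forall>qs q. (\<forall>n. qs n \<in> D) \<longrightarrow> integrable M q \<longrightarrow>
      (\<lambda>n. \<integral>x. \<bar>qs n x - q x\<bar> \<partial>M) \<longlonglongrightarrow> 0 \<longrightarrow>
      (\<exists>q'\<in>D. AE x in M. q' x = q x))"

definition unif_integrable :: "'a measure \<Rightarrow> ('a \<Rightarrow> real) set \<Rightarrow> bool" where
  "unif_integrable M D \<longleftrightarrow>
     (\<lambda>n::nat. SUP q\<in>D. \<integral>\<^sup>+x. ennreal (q x * indicator {y. q y > real n} x) \<partial>M) \<longlonglongrightarrow> 0"

definition L1s :: "'a measure \<Rightarrow> ('a \<Rightarrow> real) set \<Rightarrow> ('a \<Rightarrow> real) set" where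
  "L1s M D = {X \<in> borel_measurable M.
     (\<lambda>n::nat. SUP q\<in>D. \<integral>\<^sup>+x. ennreal (q x * \<bar>X x\<bar> * indicator {y. \<bar>X y\<bar> > real n} x) \<partial>M)
        \<longlonglongrightarrow> 0}"

definition extreme_measures :: "'a measure \<Rightarrow> (('a \<Rightarrow> real) \<Rightarrow> ereal) \<Rightarrow> ('a \<Rightarrow> real) set
    \<Rightarrow> ('a \<Rightarrow> real) \<Rightarrow> ('a \<Rightarrow> real) set" where
  "extreme_measures M u D W = {q \<in> D. EQ M q W = u W \<and> \<bar>u W\<bar> \<noteq> \<infinity>}"

end

theory Submission
  imports Defs
begin

lemma dens_D:
  assumes "q \<in> densities M"
  shows "q \<in> borel_measurable M" "\<And>x. x \<in> space M \<Longrightarrow> 0 \<le> q x" "integrable M q" "(\<integral>x. q x \<partial>M) = 1"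
  using assms unfolding densities_def by auto

lemma maxmul: "0 \<le> (q::real) \<Longrightarrow> q * max t 0 = max (q * t) 0"
  by (cases "t \<ge> 0") (auto simp: max_def mult_le_0_iff mult_nonneg_nonneg)

lemma EQ_real:
  assumes q: "q \<in> densities M" and X: "X \<in> borel_measurable M"
    and I: "integrable M (\<lambda>x. q x * X x)"
  shows "EQ M q X = ereal (\<integral>x. q x * X x \<partial>M)"
proof -
  note qD = dens_D[OF q]
  have Ip: "integrable M (\<lambda>x. max (q x * X x) 0)" using I by auto
  have In: "integrable M (\<lambda>x. max (- (q x * X x)) 0)" using I by auto
  have a: "(\<integral>\<^sup>+x. ennreal (q x * max (X x) 0) \<partial>M) = ennreal (\<integral>x. max (q x * X x) 0 \<partial>M)"
  proof -
    have "(\<integral>\<^sup>+x. ennreal (q x * max (X x) 0) \<partial>M) = (\<integral>\<^sup>+x. ennreal (max (q x * X x) 0) \<partial>M)"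
      by (rule nn_integral_cong) (use qD(2) in \<open>auto simp: maxmul\<close>)
    also have "\<dots> = ennreal (\<integral>x. max (q x * X x) 0 \<partial>M)"
      by (rule nn_integral_eq_integral[OF Ip]) auto
    finally show ?thesis .
  qed
  have b: "(\<integral>\<^sup>+x. ennreal (q x * max (- X x) 0) \<partial>M) = ennreal (\<integral>x. max (- (q x * X x)) 0 \<partial>M)"
  proof -
    have "(\<integral>\<^sup>+x. ennreal (q x * max (- X x) 0) \<partial>M) = (\<integral>\<^sup>+x. ennreal (max (- (q x * X x)) 0) \<partial>M)"
      by (rule nn_integral_cong) (use qD(2) in \<open>auto simp: maxmul\<close>)
    also have "\<dots> = ennreal (\<integral>x. max (- (q x * X x)) 0 \<partial>M)"
      by (rule nn_integral_eq_integral[OF In]) auto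
    finally show ?thesis .
  qed
  have "(\<integral>x. q x * X x \<partial>M) = (\<integral>x. max (q x * X x) 0 - max (- (q x * X x)) 0 \<partial>M)"
    by (rule Bochner_Integration.integral_cong) (auto simp: max_def)
  also have "\<dots> = (\<integral>x. max (q x * X x) 0 \<partial>M) - (\<integral>x. max (- (q x * X x)) 0 \<partial>M)"
    using Ip In by simp
  finally have e: "(\<integral>x. q x * X x \<partial>M) = (\<integral>x. max (q x * X x) 0 \<partial>M) - (\<integral>x. max (- (q x * X x)) 0 \<partial>M)" .
  have p1: "0 \<le> (\<integral>x. max (q x * X x) 0 \<partial>M)" by (rule integral_nonneg_AE) auto
  have p2: "0 \<le> (\<integral>x. max (- (q x * X x)) 0 \<partial>M)" by (rule integral_nonneg_AE) auto
  show ?thesis unfolding EQ_def Let_def a b e using p1 p2 by simp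
qed

lemma mid_dens:
  assumes "q1 \<in> densities M" "q2 \<in> densities M"
  shows "(\<lambda>x. (q1 x + q2 x) / 2) \<in> densities M"
  using dens_D[OF assms(1)] dens_D[OF assms(2)] unfolding densities_def by auto

definition EQf :: "ennreal \<Rightarrow> ennreal \<Rightarrow> ereal" where
  "EQf a b = (if enn2ereal a = \<infinity> \<and> enn2ereal b = \<infinity> then - \<infinity> else enn2ereal a - enn2ereal b)"

lemma EQf_top: "EQf a top = -\<infinity>"
  unfolding EQf_def by (cases a) auto

lemma EQf_mid:
  fixes a1 a2 am b1 b2 bm :: ennreal and v :: ereal
  assumes "am * 2 = a1 + a2" "bm * 2 = b1 + b2" "v \<le> EQf a1 b1" "v \<le> EQf a2 b2"
  shows "v \<le> EQf am bm"
proof (cases "bm = top")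
  case True
  then have "b1 + b2 = top" using assms(2) by (simp add: ennreal_top_mult)
  then have "b1 = top \<or> b2 = top" by (simp add: ennreal_add_eq_top)
  then have "EQf a1 b1 = -\<infinity> \<or> EQf a2 b2 = -\<infinity>"
    using EQf_top by auto
  then have "v = -\<infinity>" using assms(3,4) by auto
  then show ?thesis by simp
next
  case bm: False
  then have "b1 + b2 \<noteq> top" using assms(2)[symmetric] by (simp add: ennreal_mult_eq_top_iff)
  then have b1: "b1 \<noteq> top" and b2: "b2 \<noteq> top" by (auto simp: ennreal_add_eq_top)
  show ?thesis
  proof (cases "am = top")
    case True
    then show ?thesis using bm unfolding EQf_def by (cases bm) auto
  next
    case am: False
    then have "a1 + a2 \<noteq> top" using assms(1)[symmetric] by (simp add: ennreal_mult_eq_top_iff)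
    then have a1: "a1 \<noteq> top" and a2: "a2 \<noteq> top" by (auto simp: ennreal_add_eq_top)
    obtain x1 where x1: "a1 = ennreal x1" "0 \<le> x1" using a1 by (cases a1) auto
    obtain x2 where x2: "a2 = ennreal x2" "0 \<le> x2" using a2 by (cases a2) auto
    obtain y1 where y1: "b1 = ennreal y1" "0 \<le> y1" using b1 by (cases b1) auto
    obtain y2 where y2: "b2 = ennreal y2" "0 \<le> y2" using b2 by (cases b2) auto
    obtain xm where xm: "am = ennreal xm" "0 \<le> xm" using am by (cases am) auto
    obtain ym where ym: "bm = ennreal ym" "0 \<le> ym" using bm by (cases bm) auto
    have "ennreal (xm * 2) = ennreal (x1 + x2)" using assms(1) x1 x2 xm
      by (simp add: ennreal_mult ennreal_plus)
    hence ex: "xm * 2 = x1 + x2" using x1 x2 xm by (metis ennreal_inj add_nonneg_nonneg mult_nonneg_nonneg zero_le_numeral)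
    have "ennreal (ym * 2) = ennreal (y1 + y2)" using assms(2) y1 y2 ym
      by (simp add: ennreal_mult ennreal_plus)
    hence ey: "ym * 2 = y1 + y2" using y1 y2 ym by (metis ennreal_inj add_nonneg_nonneg mult_nonneg_nonneg zero_le_numeral)
    have v: "v \<le> ereal (x1 - y1)" "v \<le> ereal (x2 - y2)"
      using assms(3,4) x1 x2 y1 y2 unfolding EQf_def by auto
    show ?thesis using ex ey v xm ym unfolding EQf_def
      by (cases v) auto
  qed
qed

lemma L1_complete:
  fixes p :: "nat \<Rightarrow> 'a \<Rightarrow> real"
  assumes int: "\<And>n. integrable M (p n)"
    and C: "\<And>e. e > 0 \<Longrightarrow> \<exists>N. \<forall>n\<ge>N. \<forall>k\<ge>N. (\<integral>x. \<bar>p n x - p k x\<bar> \<partial>M) < e"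
  shows "\<exists>q. integrable M q \<and> (\<lambda>n. \<integral>x. \<bar>p n x - q x\<bar> \<partial>M) \<longlonglongrightarrow> 0"
proof -
  have [measurable]: "\<And>n. p n \<in> borel_measurable M" using int by auto
  have "\<forall>j. \<exists>N. \<forall>n\<ge>N. \<forall>k\<ge>N. (\<integral>x. \<bar>p n x - p k x\<bar> \<partial>M) < (1/2)^j"
    using C by simp
  then obtain Nf where Nf: "\<And>j n k. n \<ge> Nf j \<Longrightarrow> k \<ge> Nf j \<Longrightarrow> (\<integral>x. \<bar>p n x - p k x\<bar> \<partial>M) < (1/2)^j"
    by metis
  define r where "r j = (\<Sum>i\<le>j. Nf i)" for j
  have r_ge: "Nf j \<le> r j" for j unfolding r_def
    by (rule member_le_sum) auto
  have r_mono: "incseq r" unfolding r_def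
    by (rule incseq_SucI) auto
  have rk: "(\<integral>x. \<bar>p m x - p (r j) x\<bar> \<partial>M) < (1/2)^j" if "r j \<le> m" for j m
    using Nf[of j m "r j"] r_ge[of j] that by auto
  have rjk: "(\<integral>x. \<bar>p (r j) x - p (r k) x\<bar> \<partial>M) < (1/2)^j" if "j \<le> k" for j k
    using Nf[of j "r j" "r k"] r_ge[of j] r_mono that by (auto simp: incseq_def intro: order_trans)
  define d where "d j x = \<bar>p (r (Suc j)) x - p (r j) x\<bar>" for j x
  have [measurable]: "\<And>j. d j \<in> borel_measurable M" unfolding d_def by measurable
  have dint: "integrable M (d j)" for j unfolding d_def using int by auto
  have dnn: "(\<integral>\<^sup>+x. ennreal (d j x) \<partial>M) \<le> ennreal ((1/2)^j)" for j
  proof -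
    have "(\<integral>\<^sup>+x. ennreal (d j x) \<partial>M) = ennreal (\<integral>x. d j x \<partial>M)"
      by (rule nn_integral_eq_integral[OF dint]) (auto simp: d_def)
    also have "\<dots> \<le> ennreal ((1/2)^j)"
      using rjk[of j "Suc j"] by (auto simp: d_def abs_minus_commute intro!: ennreal_leI)
    finally show ?thesis .
  qed
  define S where "S x = (\<Sum>j. ennreal (d j x))" for x
  have [measurable]: "S \<in> borel_measurable M" unfolding S_def by measurable
  have "(\<integral>\<^sup>+x. S x \<partial>M) = (\<Sum>j. \<integral>\<^sup>+x. ennreal (d j x) \<partial>M)"
    unfolding S_def by (rule nn_integral_suminf) auto
  also have "\<dots> \<le> (\<Sum>j. ennreal ((1/2)^j))"
    by (intro suminf_le dnn) auto
  also have "\<dots> = ennreal (\<Sum>j. (1/2)^j)"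
    by (rule suminf_ennreal2) auto
  finally have "(\<integral>\<^sup>+x. S x \<partial>M) \<noteq> \<infinity>" by (auto simp: top_unique)
  then have AES: "AE x in M. S x \<noteq> \<infinity>" by (intro nn_integral_PInf_AE) auto
  define q where "q x = lim (\<lambda>j. p (r j) x)" for x
  have [measurable]: "q \<in> borel_measurable M" unfolding q_def by measurable
  have conv: "(\<lambda>j. p (r j) x) \<longlonglongrightarrow> q x" if "S x \<noteq> \<infinity>" for x
  proof -
    have "summable (\<lambda>j. d j x)"
      by (rule summable_suminf_not_top) (use that in \<open>auto simp: S_def d_def\<close>)
    then have "summable (\<lambda>j. p (r (Suc j)) x - p (r j) x)"
      unfolding d_def by (rule summable_rabs_cancel)
    then have "convergent (\<lambda>n. \<Sum>j<n. p (r (Suc j)) x - p (r j) x)"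
      by (simp add: summable_iff_convergent)
    then have "convergent (\<lambda>n. p (r n) x - p (r 0) x)"
      using sum_lessThan_telescope[of "\<lambda>j. p (r j) x"] by simp
    then have "convergent (\<lambda>n. (p (r n) x - p (r 0) x) + p (r 0) x)"
      by (intro convergent_add convergent_const)
    then have "convergent (\<lambda>n. p (r n) x)" by simp
    then show ?thesis unfolding q_def by (simp add: convergent_LIMSEQ_iff)
  qed
  have AEc: "AE x in M. (\<lambda>j. p (r j) x) \<longlonglongrightarrow> q x"
    using AES by eventually_elim (rule conv)
  have fat: "(\<integral>\<^sup>+x. ennreal \<bar>p (r j) x - q x\<bar> \<partial>M) \<le> ennreal ((1/2)^j)" for j
  proof -
    have "(\<integral>\<^sup>+x. ennreal \<bar>p (r j) x - q x\<bar> \<partial>M) = (\<integral>\<^sup>+x. liminf (\<lambda>k. ennreal \<bar>p (r j) x - p (r k) x\<bar>) \<partial>M)"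
    proof (rule nn_integral_cong_AE)
      show "AE x in M. ennreal \<bar>p (r j) x - q x\<bar> = liminf (\<lambda>k. ennreal \<bar>p (r j) x - p (r k) x\<bar>)"
        using AEc
      proof eventually_elim
        case (elim x)
        have "(\<lambda>k. ennreal \<bar>p (r j) x - p (r k) x\<bar>) \<longlonglongrightarrow> ennreal \<bar>p (r j) x - q x\<bar>"
          by (intro tendsto_ennrealI tendsto_rabs tendsto_diff tendsto_const elim)
        then show ?case by (metis lim_imp_Liminf trivial_limit_sequentially)
      qed
    qed
    also have "\<dots> \<le> liminf (\<lambda>k. \<integral>\<^sup>+x. ennreal \<bar>p (r j) x - p (r k) x\<bar> \<partial>M)"
      by (rule nn_integral_liminf) auto
    also have "\<dots> \<le> limsup (\<lambda>k. \<integral>\<^sup>+x. ennreal \<bar>p (r j) x - p (r k) x\<bar> \<partial>M)"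
      by (rule Liminf_le_Limsup) auto
    also have "\<dots> \<le> ennreal ((1/2)^j)"
    proof (rule Limsup_bounded)
      show "\<forall>\<^sub>F k in sequentially. (\<integral>\<^sup>+x. ennreal \<bar>p (r j) x - p (r k) x\<bar> \<partial>M) \<le> ennreal ((1/2)^j)"
        unfolding eventually_sequentially
      proof (intro exI allI impI)
        fix k assume "j \<le> k"
        have "(\<integral>\<^sup>+x. ennreal \<bar>p (r j) x - p (r k) x\<bar> \<partial>M) = ennreal (\<integral>x. \<bar>p (r j) x - p (r k) x\<bar> \<partial>M)"
          by (rule nn_integral_eq_integral) (use int in auto)
        also have "\<dots> \<le> ennreal ((1/2)^j)"
          using rjk[OF \<open>j \<le> k\<close>] by (auto intro!: ennreal_leI)
        finally show "(\<integral>\<^sup>+x. ennreal \<bar>p (r j) x - p (r k) x\<bar> \<partial>M) \<le> ennreal ((1/2)^j)" .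
      qed
    qed
    finally show ?thesis .
  qed
  have intd: "integrable M (\<lambda>x. p (r j) x - q x)" for j
  proof (rule integrableI_bounded)
    show "(\<integral>\<^sup>+x. ennreal (norm (p (r j) x - q x)) \<partial>M) < \<infinity>"
      using fat[of j] by (auto simp: less_top[symmetric] top_unique)
  qed auto
  have qint: "integrable M q"
  proof -
    have "integrable M (\<lambda>x. p (r 0) x - (p (r 0) x - q x))"
      by (rule Bochner_Integration.integrable_diff[OF int intd])
    then show ?thesis by simp
  qed
  have bd: "(\<integral>x. \<bar>p (r j) x - q x\<bar> \<partial>M) \<le> (1/2)^j" for j
  proof -
    have "ennreal (\<integral>x. \<bar>p (r j) x - q x\<bar> \<partial>M) = (\<integral>\<^sup>+x. ennreal \<bar>p (r j) x - q x\<bar> \<partial>M)"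
      by (rule nn_integral_eq_integral[symmetric]) (use intd in auto)
    also have "\<dots> \<le> ennreal ((1/2)^j)" by (rule fat)
    finally show ?thesis by (simp add: ennreal_le_iff[symmetric] del: ennreal_le_iff)
  qed
  have "(\<lambda>n. \<integral>x. \<bar>p n x - q x\<bar> \<partial>M) \<longlonglongrightarrow> 0"
  proof (rule LIMSEQ_I)
    fix e :: real assume "0 < e"
    have "(\<lambda>j. (1/2::real)^j) \<longlonglongrightarrow> 0" by (rule LIMSEQ_realpow_zero) auto
    then obtain j where j: "(1/2::real)^j < e/2"
      using \<open>0 < e\<close> by (metis LIMSEQ_D half_gt_zero le_refl norm_power real_norm_def zero_le_divide_1_iff zero_le_numeral power_abs abs_of_nonneg diff_zero
              divide_nonneg_nonneg power_le_one zero_less_one_class.zero_le_one)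
    show "\<exists>no. \<forall>n\<ge>no. norm ((\<integral>x. \<bar>p n x - q x\<bar> \<partial>M) - 0) < e"
    proof (intro exI allI impI)
      fix n assume "r j \<le> n"
      have "(\<integral>x. \<bar>p n x - q x\<bar> \<partial>M) \<le> (\<integral>x. \<bar>p n x - p (r j) x\<bar> + \<bar>p (r j) x - q x\<bar> \<partial>M)"
        by (rule integral_mono) (use int qint intd in auto)
      also have "\<dots> = (\<integral>x. \<bar>p n x - p (r j) x\<bar> \<partial>M) + (\<integral>x. \<bar>p (r j) x - q x\<bar> \<partial>M)"
        by (rule Bochner_Integration.integral_add) (use int qint intd in auto)
      also have "\<dots> < e"
        using rk[OF \<open>r j \<le> n\<close>] bd[of j] j by auto
      finally have "(\<integral>x. \<bar>p n x - q x\<bar> \<partial>M) < e" .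
      moreover have "0 \<le> (\<integral>x. \<bar>p n x - q x\<bar> \<partial>M)" by auto
      ultimately show "norm ((\<integral>x. \<bar>p n x - q x\<bar> \<partial>M) - 0) < e" by simp
    qed
  qed
  then show ?thesis using qint by blast
qed

definition Gf :: "real \<Rightarrow> real \<Rightarrow> real" where
  "Gf a b = (1/(1+a))/2 + (1/(1+b))/2 - 1/(1+(a+b)/2)"

lemma Gf_eq: assumes "0 \<le> a" "0 \<le> b"
  shows "Gf a b = (a-b)^2 / (2*(1+a)*(1+b)*(2+a+b))"
proof -
  have h: "1 + (a+b)/2 = (2+a+b)/2" by simp
  show ?thesis using assms unfolding Gf_def h by (simp add: divide_simps) (simp add: power2_eq_square algebra_simps)
qed

lemma Gf_nonneg: assumes "0 \<le> a" "0 \<le> b" shows "0 \<le> Gf a b"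
  using assms by (simp add: Gf_eq)

lemma Gf_le1: assumes "0 \<le> a" "0 \<le> b" shows "Gf a b \<le> 1"
proof -
  have "1/(1+a)/2 \<le> 1/2" "1/(1+b)/2 \<le> 1/2" "0 \<le> 1/(1+(a+b)/2)" using assms by auto
  then show ?thesis unfolding Gf_def by linarith
qed

lemma gap_bound:
  fixes a b N e :: real
  assumes a: "0 \<le> a" and b: "0 \<le> b" and N: "0 \<le> N" and e: "0 < e"
  shows "\<bar>a - b\<bar> \<le> e + 4*(1+N)^3 * Gf a b / e + 2*(if a > N then a else 0) + 2*(if b > N then b else 0)"
proof (cases "a \<le> N \<and> b \<le> N")
  case True
  have P: "0 < 2*(1+a)*(1+b)*(2+a+b)" using a b by auto
  have "2*(1+a)*(1+b)*(2+a+b) \<le> 2*(1+N)*(1+N)*(2+N+N)"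
    using True a b by (intro mult_mono) auto
  also have "\<dots> = 4*(1+N)^3" by (simp add: power3_eq_cube algebra_simps)
  finally have Q: "2*(1+a)*(1+b)*(2+a+b) \<le> 4*(1+N)^3" .
  have "(a-b)^2 = 2*(1+a)*(1+b)*(2+a+b) * Gf a b" using P a b by (simp add: Gf_eq)
  also have "\<dots> \<le> 4*(1+N)^3 * Gf a b" using Q Gf_nonneg[OF a b] by (rule mult_right_mono)
  finally have R: "(a-b)^2 \<le> 4*(1+N)^3 * Gf a b" .
  have S: "\<bar>a - b\<bar> \<le> e + (a-b)^2 / e"
  proof (cases "\<bar>a - b\<bar> \<le> e")
    case True then show ?thesis using e by (simp add: add_increasing2)
  next
    case False
    then have "\<bar>a-b\<bar> * e \<le> \<bar>a-b\<bar> * \<bar>a-b\<bar>" using e by (intro mult_left_mono) auto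
    then have "\<bar>a-b\<bar> \<le> (a-b)^2 / e" using e by (simp add: field_simps power2_eq_square)
    then show ?thesis using e by linarith
  qed
  have "(a-b)^2 / e \<le> 4*(1+N)^3 * Gf a b / e" using R e by (simp add: divide_right_mono)
  then show ?thesis using S True by auto
next
  case False
  have "0 \<le> 4*(1+N)^3 * Gf a b / e" using Gf_nonneg[OF a b] N e by auto
  moreover have "\<bar>a - b\<bar> \<le> 2*(if a > N then a else 0) + 2*(if b > N then b else 0)"
    using False a b by auto
  ultimately show ?thesis using e by linarith
qed

lemma W_bound:
  fixes a b w N :: real
  assumes "0 \<le> a" "0 \<le> b" "0 \<le> N"
  shows "(a - b) * w \<le> N * \<bar>a - b\<bar> + (if \<bar>w\<bar> > N then a * \<bar>w\<bar> else 0) + (if \<bar>w\<bar> > N then b * \<bar>w\<bar> else 0)"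
proof (cases "\<bar>w\<bar> > N")
  case True
  have "(a - b) * w \<le> \<bar>a - b\<bar> * \<bar>w\<bar>" by (metis abs_ge_self abs_mult)
  also have "\<dots> \<le> (a + b) * \<bar>w\<bar>" using assms by (intro mult_right_mono) auto
  finally have "(a - b) * w \<le> a * \<bar>w\<bar> + b * \<bar>w\<bar>" by (simp add: distrib_right)
  moreover have "0 \<le> N * \<bar>a - b\<bar>" using assms by simp
  ultimately show ?thesis using True by simp
next
  case False
  have "(a - b) * w \<le> \<bar>a - b\<bar> * \<bar>w\<bar>" by (metis abs_ge_self abs_mult)
  also have "\<dots> \<le> \<bar>a - b\<bar> * N" using False by (intro mult_left_mono) auto
  finally show ?thesis using False by (simp add: mult.commute)
qed


lemma SUP_bound:
  fixes F :: "'q \<Rightarrow> nat \<Rightarrow> ennreal"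
  assumes "(\<lambda>n. SUP q\<in>D. F q n) \<longlonglongrightarrow> 0" "0 < e"
  shows "\<exists>N. \<forall>q\<in>D. F q N < ennreal e"
proof -
  have "eventually (\<lambda>n. (SUP q\<in>D. F q n) < ennreal e) sequentially"
    using assms by (intro order_tendstoD(2)) auto
  then obtain N where "(SUP q\<in>D. F q N) < ennreal e" by (auto simp: eventually_sequentially)
  then show ?thesis by (auto dest: SUP_lessD)
qed

lemma ind_rewrite: "(\<integral>\<^sup>+x. ennreal (f x * indicator {y. P y} x) \<partial>M) = (\<integral>\<^sup>+x. ennreal (if P x then f x else 0) \<partial>M)"
  by (rule nn_integral_cong) (simp add: indicator_def)

locale setting = prob_space M for M :: "'a measure" +
  fixes u :: "('a \<Rightarrow> real) \<Rightarrow> ereal" and W :: "'a \<Rightarrow> real" and D :: "('a \<Rightarrow> real) set"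
  assumes D_def: "D = determining_set M u"
    and cu: "coherent_utility M u" and cl: "L1_closed M D"
    and ui: "unif_integrable M D" and WL: "W \<in> L1s M D"
begin

lemma W_meas[measurable]: "W \<in> borel_measurable M" using WL unfolding L1s_def by blast

lemma D_dens: "q \<in> D \<Longrightarrow> q \<in> densities M" unfolding D_def determining_set_def by blast
lemma D_meas: "q \<in> D \<Longrightarrow> q \<in> borel_measurable M" by (rule dens_D(1)[OF D_dens])
lemma D_nn: "q \<in> D \<Longrightarrow> x \<in> space M \<Longrightarrow> 0 \<le> q x" by (rule dens_D(2)[OF D_dens])
lemma D_int: "q \<in> D \<Longrightarrow> integrable M q" by (rule dens_D(3)[OF D_dens])
lemma D_one: "q \<in> D \<Longrightarrow> (\<integral>x. q x \<partial>M) = 1" by (rule dens_D(4)[OF D_dens])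

lemma D_mid:
  assumes q1: "q1 \<in> D" and q2: "q2 \<in> D"
  shows "(\<lambda>x. (q1 x + q2 x)/2) \<in> D"
proof -
  have [measurable]: "q1 \<in> borel_measurable M" "q2 \<in> borel_measurable M" using q1 q2 by (auto simp: D_meas)
  have "(\<lambda>x. (q1 x + q2 x)/2) \<in> densities M" using mid_dens D_dens q1 q2 by blast
  moreover have "EQ M (\<lambda>x. (q1 x + q2 x)/2) X \<ge> u X" if X[measurable]: "X \<in> borel_measurable M" for X
  proof -
    have eq: "EQ M q X = EQf (\<integral>\<^sup>+x. ennreal (q x * max (X x) 0) \<partial>M) (\<integral>\<^sup>+x. ennreal (q x * max (- X x) 0) \<partial>M)" for q
      unfolding EQ_def EQf_def Let_def by simp
    have lin: "(\<integral>\<^sup>+x. ennreal ((q1 x + q2 x)/2 * f x) \<partial>M) * 2 = (\<integral>\<^sup>+x. ennreal (q1 x * f x) \<partial>M) + (\<integral>\<^sup>+x. ennreal (q2 x * f x) \<partial>M)"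
      if f[measurable]: "f \<in> borel_measurable M" and fnn: "\<And>x. 0 \<le> f x" for f
    proof -
      have "(\<integral>\<^sup>+x. ennreal ((q1 x + q2 x)/2 * f x) \<partial>M) * 2 = (\<integral>\<^sup>+x. ennreal ((q1 x + q2 x)/2 * f x) * 2 \<partial>M)"
        by (rule nn_integral_multc[symmetric]) measurable
      also have "\<dots> = (\<integral>\<^sup>+x. ennreal (q1 x * f x) + ennreal (q2 x * f x) \<partial>M)"
      proof (rule nn_integral_cong)
        fix x assume x: "x \<in> space M"
        have a: "0 \<le> q1 x" "0 \<le> q2 x" using D_nn q1 q2 x by auto
        have "ennreal ((q1 x + q2 x)/2 * f x) * 2 = ennreal ((q1 x + q2 x)/2 * f x * 2)"
          by (metis ennreal_mult'' ennreal_numeral zero_le_numeral)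
        also have "\<dots> = ennreal (q1 x * f x + q2 x * f x)" by (intro arg_cong[where f=ennreal]) (simp add: algebra_simps)
        also have "\<dots> = ennreal (q1 x * f x) + ennreal (q2 x * f x)"
          using a fnn[of x] by (intro ennreal_plus) auto
        finally show "ennreal ((q1 x + q2 x)/2 * f x) * 2 = ennreal (q1 x * f x) + ennreal (q2 x * f x)" .
      qed
      also have "\<dots> = (\<integral>\<^sup>+x. ennreal (q1 x * f x) \<partial>M) + (\<integral>\<^sup>+x. ennreal (q2 x * f x) \<partial>M)"
        by (rule nn_integral_add) measurable
      finally show ?thesis .
    qed
    have u1: "u X \<le> EQ M q1 X" and u2: "u X \<le> EQ M q2 X"
      using q1 q2 X by (auto simp: D_def determining_set_def)
    show ?thesis unfolding eq
      by (rule EQf_mid[OF lin lin]) (use u1 u2 in \<open>auto simp: eq\<close>)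
  qed
  ultimately show ?thesis by (auto simp: D_def determining_set_def)
qed

lemma D_ne_uW: "D \<noteq> {}" "u W = (INF q\<in>D. EQ M q W)"
proof -
  obtain D0 where D0: "D0 \<subseteq> densities M" "D0 \<noteq> {}" "\<And>X. X \<in> borel_measurable M \<Longrightarrow> u X = (INF q\<in>D0. EQ M q X)"
    using cu unfolding coherent_utility_def by blast
  have sub: "D0 \<subseteq> D"
    using D0 by (auto simp: D_def determining_set_def intro: INF_lower)
  then show "D \<noteq> {}" using D0(2) by blast
  have "u W \<le> (INF q\<in>D. EQ M q W)"
    by (rule INF_greatest) (auto simp: D_def determining_set_def)
  moreover have "(INF q\<in>D. EQ M q W) \<le> (INF q\<in>D0. EQ M q W)"
    by (rule INF_superset_mono[OF sub]) simp
  ultimately show "u W = (INF q\<in>D. EQ M q W)" using D0(3)[OF W_meas] by simp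
qed

lemma tail_nn:
  assumes "0 < e"
  shows "\<exists>N::nat. \<forall>q\<in>D. (\<integral>\<^sup>+x. ennreal (if \<bar>W x\<bar> > real N then q x * \<bar>W x\<bar> else 0) \<partial>M) < ennreal e"
proof -
  have "(\<lambda>n::nat. SUP q\<in>D. \<integral>\<^sup>+x. ennreal (q x * \<bar>W x\<bar> * indicator {y. \<bar>W y\<bar> > real n} x) \<partial>M) \<longlonglongrightarrow> 0"
    using WL by (simp add: L1s_def)
  from SUP_bound[OF this assms] show ?thesis
    by (simp only: ind_rewrite)
qed

lemma intW_K: "\<exists>K. \<forall>q\<in>D. integrable M (\<lambda>x. q x * W x) \<and> (\<integral>x. \<bar>q x * W x\<bar> \<partial>M) \<le> K"
proof -
  obtain N0 :: nat where N0: "\<And>q. q \<in> D \<Longrightarrow> (\<integral>\<^sup>+x. ennreal (if \<bar>W x\<bar> > real N0 then q x * \<bar>W x\<bar> else 0) \<partial>M) < ennreal 1"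
    using tail_nn[of 1] by auto
  have *: "integrable M (\<lambda>x. q x * W x) \<and> (\<integral>x. \<bar>q x * W x\<bar> \<partial>M) \<le> real N0 + 1" if q: "q \<in> D" for q
  proof -
    have [measurable]: "q \<in> borel_measurable M" using q D_meas by auto
    have "(\<integral>\<^sup>+x. ennreal (norm (q x * W x)) \<partial>M) \<le> (\<integral>\<^sup>+x. ennreal (real N0 * q x) + ennreal (if \<bar>W x\<bar> > real N0 then q x * \<bar>W x\<bar> else 0) \<partial>M)"
    proof (rule nn_integral_mono)
      fix x assume x: "x \<in> space M"
      have qx: "0 \<le> q x" using D_nn q x by auto
      have "norm (q x * W x) \<le> real N0 * q x + (if \<bar>W x\<bar> > real N0 then q x * \<bar>W x\<bar> else 0)"
      proof (cases "\<bar>W x\<bar> > real N0")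
        case True then show ?thesis using qx by (simp add: abs_mult)
      next
        case False
        then have "q x * \<bar>W x\<bar> \<le> q x * real N0" using qx by (intro mult_left_mono) auto
        then show ?thesis using False qx by (simp add: abs_mult mult.commute)
      qed
      then have "ennreal (norm (q x * W x)) \<le> ennreal (real N0 * q x + (if \<bar>W x\<bar> > real N0 then q x * \<bar>W x\<bar> else 0))"
        by (rule ennreal_leI)
      also have "\<dots> = ennreal (real N0 * q x) + ennreal (if \<bar>W x\<bar> > real N0 then q x * \<bar>W x\<bar> else 0)"
        by (rule ennreal_plus) (use qx in auto)
      finally show "ennreal (norm (q x * W x)) \<le> ennreal (real N0 * q x) + ennreal (if \<bar>W x\<bar> > real N0 then q x * \<bar>W x\<bar> else 0)" .
    qed
    also have "\<dots> = (\<integral>\<^sup>+x. ennreal (real N0 * q x) \<partial>M) + (\<integral>\<^sup>+x. ennreal (if \<bar>W x\<bar> > real N0 then q x * \<bar>W x\<bar> else 0) \<partial>M)"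
      by (rule nn_integral_add) auto
    also have "(\<integral>\<^sup>+x. ennreal (real N0 * q x) \<partial>M) = ennreal (real N0)"
    proof -
      have "(\<integral>\<^sup>+x. ennreal (real N0 * q x) \<partial>M) = ennreal (\<integral>x. real N0 * q x \<partial>M)"
        by (rule nn_integral_eq_integral) (use q D_int D_nn in auto)
      then show ?thesis using D_one q by simp
    qed
    also have "ennreal (real N0) + (\<integral>\<^sup>+x. ennreal (if \<bar>W x\<bar> > real N0 then q x * \<bar>W x\<bar> else 0) \<partial>M) \<le> ennreal (real N0) + ennreal 1"
      using N0[OF q] by (intro add_left_mono) auto
    also have "\<dots> = ennreal (real N0 + 1)" by (simp add: ennreal_plus)
    finally have B: "(\<integral>\<^sup>+x. ennreal (norm (q x * W x)) \<partial>M) \<le> ennreal (real N0 + 1)" .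
    have I: "integrable M (\<lambda>x. q x * W x)"
      by (rule integrableI_bounded) (use B in \<open>auto simp: less_top[symmetric] top_unique\<close>)
    have "ennreal (\<integral>x. \<bar>q x * W x\<bar> \<partial>M) = (\<integral>\<^sup>+x. ennreal (norm (q x * W x)) \<partial>M)"
      by (subst nn_integral_eq_integral) (use I in auto)
    with B have "ennreal (\<integral>x. \<bar>q x * W x\<bar> \<partial>M) \<le> ennreal (real N0 + 1)" by simp
    then have "(\<integral>x. \<bar>q x * W x\<bar> \<partial>M) \<le> real N0 + 1"
      by (subst (asm) ennreal_le_iff) auto
    with I show ?thesis by simp
  qed
  then show ?thesis by blast
qed

lemma intW: "q \<in> D \<Longrightarrow> integrable M (\<lambda>x. q x * W x)" using intW_K by blast

lemma tail_int: assumes "q \<in> D" shows "integrable M (\<lambda>x. if \<bar>W x\<bar> > c then q x * \<bar>W x\<bar> else 0)"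
proof (rule Bochner_Integration.integrable_bound[OF intW[OF assms]])
  have [measurable]: "q \<in> borel_measurable M" using assms D_meas by auto
  show "(\<lambda>x. if \<bar>W x\<bar> > c then q x * \<bar>W x\<bar> else 0) \<in> borel_measurable M" by measurable
  show "AE x in M. norm (if \<bar>W x\<bar> > c then q x * \<bar>W x\<bar> else 0) \<le> norm (q x * W x)"
    using D_nn[OF assms] by (auto simp: abs_mult)
qed

lemma tail_real:
  assumes "0 < e"
  shows "\<exists>N::nat. \<forall>q\<in>D. (\<integral>x. (if \<bar>W x\<bar> > real N then q x * \<bar>W x\<bar> else 0) \<partial>M) < e"
proof -
  obtain N :: nat where N: "\<And>q. q \<in> D \<Longrightarrow> (\<integral>\<^sup>+x. ennreal (if \<bar>W x\<bar> > real N then q x * \<bar>W x\<bar> else 0) \<partial>M) < ennreal e"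
    using tail_nn[OF assms] by auto
  have "(\<integral>x. (if \<bar>W x\<bar> > real N then q x * \<bar>W x\<bar> else 0) \<partial>M) < e" if q: "q \<in> D" for q
  proof -
    have "ennreal (\<integral>x. (if \<bar>W x\<bar> > real N then q x * \<bar>W x\<bar> else 0) \<partial>M) = (\<integral>\<^sup>+x. ennreal (if \<bar>W x\<bar> > real N then q x * \<bar>W x\<bar> else 0) \<partial>M)"
      by (rule nn_integral_eq_integral[symmetric]) (use tail_int[OF q] D_nn[OF q] in auto)
    with N[OF q] have "ennreal (\<integral>x. (if \<bar>W x\<bar> > real N then q x * \<bar>W x\<bar> else 0) \<partial>M) < ennreal e" by simp
    then show ?thesis by (subst (asm) ennreal_less_iff) (auto intro!: integral_nonneg_AE simp: D_nn[OF q])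
  qed
  then show ?thesis by blast
qed

lemma ui_int: assumes "q \<in> D" shows "integrable M (\<lambda>x. if q x > c then q x else 0)"
proof (rule Bochner_Integration.integrable_bound[OF D_int[OF assms]])
  have [measurable]: "q \<in> borel_measurable M" using assms D_meas by auto
  show "(\<lambda>x. if q x > c then q x else 0) \<in> borel_measurable M" by measurable
  show "AE x in M. norm (if q x > c then q x else 0) \<le> norm (q x)"
    using D_nn[OF assms] by auto
qed

lemma ui_real:
  assumes "0 < e"
  shows "\<exists>N::nat. \<forall>q\<in>D. (\<integral>x. (if q x > real N then q x else 0) \<partial>M) < e"
proof -
  have "(\<lambda>n::nat. SUP q\<in>D. \<integral>\<^sup>+x. ennreal (q x * indicator {y. q y > real n} x) \<partial>M) \<longlonglongrightarrow> 0"
    using ui by (simp add: unif_integrable_def)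
  from SUP_bound[OF this assms]
  have "\<exists>N::nat. \<forall>q\<in>D. (\<integral>\<^sup>+x. ennreal (if q x > real N then q x else 0) \<partial>M) < ennreal e"
    by (simp only: ind_rewrite)
  then obtain N :: nat where
    N: "\<And>q. q \<in> D \<Longrightarrow> (\<integral>\<^sup>+x. ennreal (if q x > real N then q x else 0) \<partial>M) < ennreal e"
    by blast
  have "(\<integral>x. (if q x > real N then q x else 0) \<partial>M) < e" if q: "q \<in> D" for q
  proof -
    have "ennreal (\<integral>x. (if q x > real N then q x else 0) \<partial>M) = (\<integral>\<^sup>+x. ennreal (if q x > real N then q x else 0) \<partial>M)"
      by (rule nn_integral_eq_integral[symmetric]) (use ui_int[OF q] D_nn[OF q] in auto)
    with N[OF q] have "ennreal (\<integral>x. (if q x > real N then q x else 0) \<partial>M) < ennreal e" by simp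
    then show ?thesis by (subst (asm) ennreal_less_iff) (auto intro!: integral_nonneg_AE simp: D_nn[OF q])
  qed
  then show ?thesis by blast
qed

end

context setting
begin

lemma inv_bd: "0 \<le> (a::real) \<Longrightarrow> \<bar>1 / (1 + a)\<bar> \<le> 1" "0 \<le> (a::real) \<Longrightarrow> 1 / (1 + a) \<le> 1"
  by auto

lemma c_props: "\<exists>c. u W = ereal c \<and> (\<forall>q\<in>D. c \<le> (\<integral>x. q x * W x \<partial>M)) \<and> (\<forall>e>0. \<exists>q\<in>D. (\<integral>x. q x * W x \<partial>M) < c + e)"
proof -
  obtain K where K: "\<And>q. q \<in> D \<Longrightarrow> integrable M (\<lambda>x. q x * W x)" "\<And>q. q \<in> D \<Longrightarrow> (\<integral>x. \<bar>q x * W x\<bar> \<partial>M) \<le> K"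
    using intW_K by blast
  have EQr: "EQ M q W = ereal (\<integral>x. q x * W x \<partial>M)" if "q \<in> D" for q
    using EQ_real[OF D_dens[OF that] W_meas K(1)[OF that]] .
  have uW: "u W = (INF q\<in>D. ereal (\<integral>x. q x * W x \<partial>M))"
    unfolding D_ne_uW(2) by (rule INF_cong) (auto simp: EQr)
  obtain q0 where q0: "q0 \<in> D" using D_ne_uW(1) by blast
  have lo: "ereal (-K) \<le> u W" unfolding uW
  proof (rule INF_greatest)
    fix q assume q: "q \<in> D"
    have "\<bar>\<integral>x. q x * W x \<partial>M\<bar> \<le> (\<integral>x. \<bar>q x * W x\<bar> \<partial>M)" by (rule integral_abs_bound)
    then have "-K \<le> (\<integral>x. q x * W x \<partial>M)" using K(2)[OF q] by linarith
    then show "ereal (-K) \<le> ereal (\<integral>x. q x * W x \<partial>M)" by simp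
  qed
  have hi: "u W \<le> ereal (\<integral>x. q0 x * W x \<partial>M)" unfolding uW by (rule INF_lower[OF q0])
  obtain c where c: "u W = ereal c" using lo hi by (cases "u W") auto
  show ?thesis
  proof (intro exI conjI ballI allI impI)
    show "u W = ereal c" by fact
  next
    fix q assume q: "q \<in> D"
    have "u W \<le> ereal (\<integral>x. q x * W x \<partial>M)" unfolding uW by (rule INF_lower[OF q])
    then show "c \<le> (\<integral>x. q x * W x \<partial>M)" using c by simp
  next
    fix e :: real assume "0 < e"
    then have "(INF q\<in>D. ereal (\<integral>x. q x * W x \<partial>M)) < ereal (c + e)" using c uW by simp
    then show "\<exists>q\<in>D. (\<integral>x. q x * W x \<partial>M) < c + e" by (simp add: INF_less_iff)
  qed
qed

lemma attain:
  assumes cle: "\<And>q. q \<in> D \<Longrightarrow> c \<le> (\<integral>x. q x * W x \<partial>M)"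
    and capp: "\<And>e. 0 < e \<Longrightarrow> \<exists>q\<in>D. (\<integral>x. q x * W x \<partial>M) < c + e"
  shows "\<exists>q\<in>D. (\<integral>x. q x * W x \<partial>M) \<le> c"
proof -
  define I where "I q = (\<integral>x. q x * W x \<partial>M)" for q :: "'a \<Rightarrow> real"
  define H where "H q = (\<integral>x. 1 / (1 + q x) \<partial>M)" for q :: "'a \<Rightarrow> real"
  define S where "S n = {q\<in>D. I q \<le> c + 1 / real (Suc n)}" for n
  define mm where "mm n = Inf (H ` S n)" for n
  have Hint: "integrable M (\<lambda>x. 1 / (1 + q x))" if q: "q \<in> D" for q
  proof (rule integrable_const_bound[where B=1])
    have [measurable]: "q \<in> borel_measurable M" using D_meas[OF q] .
    show "AE x in M. norm (1 / (1 + q x)) \<le> 1" by (intro AE_I2) (simp add: D_nn[OF q] inv_bd)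
    show "(\<lambda>x. 1 / (1 + q x)) \<in> borel_measurable M" by measurable
  qed
  have H0: "0 \<le> H q" if q: "q \<in> D" for q
    unfolding H_def by (rule integral_nonneg_AE) (use D_nn[OF q] in auto)
  have H1: "H q \<le> 1" if q: "q \<in> D" for q
  proof -
    have "H q \<le> (\<integral>x. 1 \<partial>M)" unfolding H_def
      by (rule integral_mono) (use Hint[OF q] in \<open>auto simp: D_nn[OF q] inv_bd\<close>)
    then show ?thesis by (simp add: prob_space)
  qed
  have Sne: "S n \<noteq> {}" for n
  proof -
    obtain q where "q \<in> D" "I q < c + 1 / real (Suc n)" using capp[of "1 / real (Suc n)"] unfolding I_def by auto
    then show ?thesis unfolding S_def by force
  qed
  have frac: "1 / real (Suc k) \<le> 1 / real (Suc n)" if "n \<le> k" for n k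
    using that by (auto intro!: divide_left_mono)
  have Smono: "S k \<subseteq> S n" if "n \<le> k" for n k
    using frac[OF that] unfolding S_def by auto
  have bdd: "bdd_below (H ` S n)" for n
    by (rule bdd_belowI[of _ 0]) (auto simp: S_def H0)
  have mm_le: "mm n \<le> H q" if "q \<in> S n" for n q
    unfolding mm_def by (rule cInf_lower) (use that bdd in auto)
  have mm_mono: "mm n \<le> mm k" if "n \<le> k" for n k
    unfolding mm_def by (rule cInf_superset_mono) (use Sne bdd Smono[OF that] in auto)
  have "\<forall>n. \<exists>q. q \<in> S n \<and> H q < mm n + 1 / real (Suc n)"
  proof
    fix n
    have "Inf (H ` S n) < mm n + 1 / real (Suc n)" unfolding mm_def by simp
    then show "\<exists>q. q \<in> S n \<and> H q < mm n + 1 / real (Suc n)"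
      using cInf_less_iff[of "H ` S n"] Sne bdd by auto
  qed
  then obtain p where pS: "\<And>n. p n \<in> S n" and pH: "\<And>n. H (p n) < mm n + 1 / real (Suc n)" by metis
  have pD: "\<And>n. p n \<in> D" and pI: "\<And>n. I (p n) \<le> c + 1 / real (Suc n)" using pS unfolding S_def by auto
  have pmeas [measurable]: "p n \<in> borel_measurable M" for n using D_meas[OF pD] .
  have pint: "integrable M (p n)" for n using D_int[OF pD] .
  have "incseq mm" by (rule incseq_SucI) (rule mm_mono, simp)
  moreover have "\<forall>i. mm i \<le> 1" using mm_le[OF pS] H1[OF pD] order_trans by blast
  ultimately obtain L where L: "mm \<longlonglongrightarrow> L" "\<forall>i. mm i \<le> L" by (rule incseq_convergent)
  define \<delta> where "\<delta> n = (L - mm n) + 1 / real (Suc n)" for n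
  have inv0: "(\<lambda>n. 1 / real (Suc n)) \<longlonglongrightarrow> 0"
    using LIMSEQ_inverse_real_of_nat by (simp add: inverse_eq_divide)
  have \<delta>0: "\<delta> \<longlonglongrightarrow> 0"
  proof -
    have "(\<lambda>n. L - mm n) \<longlonglongrightarrow> L - L" by (intro tendsto_diff tendsto_const L(1))
    then have "(\<lambda>n. (L - mm n) + 1 / real (Suc n)) \<longlonglongrightarrow> (L - L) + 0" using inv0 by (rule tendsto_add)
    then show ?thesis unfolding \<delta>_def by simp
  qed
  define mid where "mid n k = (\<lambda>x. (p n x + p k x) / 2)" for n k
  have midD: "mid n k \<in> D" for n k unfolding mid_def by (rule D_mid[OF pD pD])
  have Imid: "I (mid n k) = (I (p n) + I (p k)) / 2" for n k
  proof -
    have "I (mid n k) = (\<integral>x. (p n x * W x) / 2 + (p k x * W x) / 2 \<partial>M)" unfolding I_def mid_def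
      by (rule Bochner_Integration.integral_cong) (auto simp: field_simps)
    also have "\<dots> = (\<integral>x. p n x * W x \<partial>M) / 2 + (\<integral>x. p k x * W x \<partial>M) / 2"
      using intW[OF pD[of n]] intW[OF pD[of k]] by simp
    finally show ?thesis unfolding I_def by simp
  qed
  have midS: "mid n k \<in> S n" if "n \<le> k" for n k
    using Imid[of n k] pI[of n] pI[of k] frac[OF that] midD[of n k] unfolding S_def by auto
  have Gmeas [measurable]: "(\<lambda>x. Gf (p n x) (p k x)) \<in> borel_measurable M" for n k
    unfolding Gf_def by measurable
  have Gint: "integrable M (\<lambda>x. Gf (p n x) (p k x))" for n k
  proof (rule integrable_const_bound[where B=1])
    show "AE x in M. norm (Gf (p n x) (p k x)) \<le> 1"
      by (intro AE_I2) (simp add: D_nn[OF pD] Gf_nonneg Gf_le1)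
  qed simp
  have gap: "(\<integral>x. Gf (p n x) (p k x) \<partial>M) \<le> \<delta> n" if nk: "n \<le> k" for n k
  proof -
    have h1: "integrable M (\<lambda>x. 1 / (1 + p n x))" by (rule Hint[OF pD])
    have h2: "integrable M (\<lambda>x. 1 / (1 + p k x))" by (rule Hint[OF pD])
    have h3: "integrable M (\<lambda>x. 1 / (1 + (p n x + p k x) / 2))" using Hint[OF midD[of n k]] unfolding mid_def .
    have h12: "integrable M (\<lambda>x. (1 / (1 + p n x)) / 2 + (1 / (1 + p k x)) / 2)"
      by (intro Bochner_Integration.integrable_add Bochner_Integration.integrable_divide_zero h1 h2)
    have e1: "(\<integral>x. Gf (p n x) (p k x) \<partial>M) = (\<integral>x. (1 / (1 + p n x)) / 2 + (1 / (1 + p k x)) / 2 \<partial>M) - (\<integral>x. 1 / (1 + (p n x + p k x) / 2) \<partial>M)"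
      unfolding Gf_def by (rule Bochner_Integration.integral_diff[OF h12 h3])
    have e2: "(\<integral>x. (1 / (1 + p n x)) / 2 + (1 / (1 + p k x)) / 2 \<partial>M) = (\<integral>x. (1 / (1 + p n x)) / 2 \<partial>M) + (\<integral>x. (1 / (1 + p k x)) / 2 \<partial>M)"
      by (rule Bochner_Integration.integral_add) (intro Bochner_Integration.integrable_divide_zero h1 h2)+
    have e3: "(\<integral>x. (1 / (1 + p n x)) / 2 \<partial>M) = H (p n) / 2" unfolding H_def by (rule integral_divide_zero)
    have e4: "(\<integral>x. (1 / (1 + p k x)) / 2 \<partial>M) = H (p k) / 2" unfolding H_def by (rule integral_divide_zero)
    have e5: "(\<integral>x. 1 / (1 + (p n x + p k x) / 2) \<partial>M) = H (mid n k)" unfolding H_def mid_def by simp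
    have "(\<integral>x. Gf (p n x) (p k x) \<partial>M) = H (p n) / 2 + H (p k) / 2 - H (mid n k)"
      by (simp only: e1 e2 e3 e4 e5)
    also have "\<dots> \<le> \<delta> n"
      using pH[of n] pH[of k] mm_le[OF midS[OF nk]] L(2)[rule_format, of k] L(2)[rule_format, of n] frac[OF nk] unfolding \<delta>_def
      by linarith
    finally show ?thesis .
  qed
  have cauchy: "\<exists>N. \<forall>n\<ge>N. \<forall>k\<ge>N. (\<integral>x. \<bar>p n x - p k x\<bar> \<partial>M) < e" if e: "0 < e" for e
  proof -
    define \<eta> where "\<eta> = e / 4"
    have \<eta>: "0 < \<eta>" using e by (simp add: \<eta>_def)
    obtain N :: nat where N: "\<And>q. q \<in> D \<Longrightarrow> (\<integral>x. (if q x > real N then q x else 0) \<partial>M) < e / 16"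
      using ui_real[of "e / 16"] e by auto
    define C where "C = 4 * (1 + real N) ^ 3"
    have C: "0 < C" by (simp add: C_def)
    define t where "t = e * \<eta> / (4 * C)"
    have t: "0 < t" using e \<eta> C by (simp add: t_def)
    obtain n0 where n0: "\<And>n. n \<ge> n0 \<Longrightarrow> \<delta> n < t"
      using order_tendstoD(2)[OF \<delta>0 t] by (auto simp: eventually_sequentially)
    have main: "(\<integral>x. \<bar>p n x - p k x\<bar> \<partial>M) < e" if nk: "n0 \<le> n" "n \<le> k" for n k
    proof -
      let ?G = "(\<integral>x. Gf (p n x) (p k x) \<partial>M)"
      have ui1: "integrable M (\<lambda>x. if p n x > real N then p n x else 0)" by (rule ui_int[OF pD])
      have ui2: "integrable M (\<lambda>x. if p k x > real N then p k x else 0)" by (rule ui_int[OF pD])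
      have "(\<integral>x. \<bar>p n x - p k x\<bar> \<partial>M) \<le> (\<integral>x. \<eta> + C * Gf (p n x) (p k x) / \<eta> + 2 * (if p n x > real N then p n x else 0) + 2 * (if p k x > real N then p k x else 0) \<partial>M)"
      proof (rule integral_mono)
        show "integrable M (\<lambda>x. \<bar>p n x - p k x\<bar>)" using pint by auto
        show "integrable M (\<lambda>x. \<eta> + C * Gf (p n x) (p k x) / \<eta> + 2 * (if p n x > real N then p n x else 0) + 2 * (if p k x > real N then p k x else 0))"
          using Gint ui1 ui2 by auto
        fix x assume x: "x \<in> space M"
        show "\<bar>p n x - p k x\<bar> \<le> \<eta> + C * Gf (p n x) (p k x) / \<eta> + 2 * (if p n x > real N then p n x else 0) + 2 * (if p k x > real N then p k x else 0)"
          unfolding C_def by (rule gap_bound) (use D_nn[OF pD x] \<eta> in auto)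
      qed
      also have "\<dots> = \<eta> + C * ?G / \<eta> + 2 * (\<integral>x. (if p n x > real N then p n x else 0) \<partial>M) + 2 * (\<integral>x. (if p k x > real N then p k x else 0) \<partial>M)"
        using Gint ui1 ui2 by (simp add: prob_space)
      also have "\<dots> < e"
      proof -
        have "?G \<le> t" using gap[OF nk(2)] n0[OF nk(1)] by simp
        then have "C * ?G / \<eta> \<le> C * t / \<eta>" using C \<eta> by (intro divide_right_mono mult_left_mono) auto
        also have "C * t / \<eta> = e / 4" using C \<eta> unfolding t_def by (simp add: field_simps)
        finally have "C * ?G / \<eta> \<le> e / 4" .
        then show ?thesis using N[OF pD[of n]] N[OF pD[of k]] e unfolding \<eta>_def by linarith
      qed
      finally show ?thesis .
    qed
    show ?thesis
    proof (intro exI allI impI)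
      fix n k assume "n0 \<le> n" "n0 \<le> k"
      show "(\<integral>x. \<bar>p n x - p k x\<bar> \<partial>M) < e"
      proof (cases "n \<le> k")
        case True then show ?thesis using main \<open>n0 \<le> n\<close> by blast
      next
        case False
        then have "(\<integral>x. \<bar>p k x - p n x\<bar> \<partial>M) < e" using main \<open>n0 \<le> k\<close> by simp
        then show ?thesis by (simp add: abs_minus_commute)
      qed
    qed
  qed
  obtain q where q: "integrable M q" "(\<lambda>n. \<integral>x. \<bar>p n x - q x\<bar> \<partial>M) \<longlonglongrightarrow> 0"
    using L1_complete[OF pint cauchy] by blast
  obtain q' where q': "q' \<in> D" "AE x in M. q' x = q x"
    using cl pD q unfolding L1_closed_def by blast
  have [measurable]: "q \<in> borel_measurable M" using q(1) by auto
  have [measurable]: "q' \<in> borel_measurable M" using D_meas[OF q'(1)] .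
  have conv': "(\<lambda>n. \<integral>x. \<bar>p n x - q' x\<bar> \<partial>M) \<longlonglongrightarrow> 0"
  proof -
    have "(\<integral>x. \<bar>p n x - q' x\<bar> \<partial>M) = (\<integral>x. \<bar>p n x - q x\<bar> \<partial>M)" for n
      by (rule integral_cong_AE) (use q'(2) in auto)
    then show ?thesis using q(2) by simp
  qed
  have "I q' \<le> c"
  proof (rule ccontr)
    assume "\<not> I q' \<le> c"
    define \<epsilon> where "\<epsilon> = I q' - c"
    have \<epsilon>: "0 < \<epsilon>" using \<open>\<not> I q' \<le> c\<close> by (simp add: \<epsilon>_def)
    obtain N :: nat where N: "\<And>q. q \<in> D \<Longrightarrow> (\<integral>x. (if \<bar>W x\<bar> > real N then q x * \<bar>W x\<bar> else 0) \<partial>M) < \<epsilon> / 6"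
      using tail_real[of "\<epsilon> / 6"] \<epsilon> by auto
    have "(\<lambda>n. real N * (\<integral>x. \<bar>p n x - q' x\<bar> \<partial>M)) \<longlonglongrightarrow> real N * 0"
      by (intro tendsto_mult tendsto_const conv')
    then have ev1: "eventually (\<lambda>n. real N * (\<integral>x. \<bar>p n x - q' x\<bar> \<partial>M) < \<epsilon> / 3) sequentially"
      using \<epsilon> by (intro order_tendstoD(2)) auto
    have ev2: "eventually (\<lambda>n. 1 / real (Suc n) < \<epsilon> / 3) sequentially"
      using \<epsilon> by (intro order_tendstoD(2)[OF inv0]) auto
    have "eventually (\<lambda>n. real N * (\<integral>x. \<bar>p n x - q' x\<bar> \<partial>M) < \<epsilon> / 3 \<and> 1 / real (Suc n) < \<epsilon> / 3) sequentially"
      using ev1 ev2 by (rule eventually_conj)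
    then obtain n0 where "\<forall>n\<ge>n0. real N * (\<integral>x. \<bar>p n x - q' x\<bar> \<partial>M) < \<epsilon> / 3 \<and> 1 / real (Suc n) < \<epsilon> / 3"
      unfolding eventually_sequentially by blast
    then obtain n where n1: "real N * (\<integral>x. \<bar>p n x - q' x\<bar> \<partial>M) < \<epsilon> / 3" and n2: "1 / real (Suc n) < \<epsilon> / 3"
      by blast
    have t1: "integrable M (\<lambda>x. if \<bar>W x\<bar> > real N then q' x * \<bar>W x\<bar> else 0)" by (rule tail_int[OF q'(1)])
    have t2: "integrable M (\<lambda>x. if \<bar>W x\<bar> > real N then p n x * \<bar>W x\<bar> else 0)" by (rule tail_int[OF pD])
    have i1: "integrable M (\<lambda>x. \<bar>q' x - p n x\<bar>)" using D_int[OF q'(1)] pint by auto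
    have iqW: "integrable M (\<lambda>x. q' x * W x)" by (rule intW[OF q'(1)])
    have ipW: "integrable M (\<lambda>x. p n x * W x)" by (rule intW[OF pD])
    have "(\<integral>x. (q' x - p n x) * W x \<partial>M) = (\<integral>x. q' x * W x - p n x * W x \<partial>M)"
      by (simp only: left_diff_distrib)
    also have "\<dots> = I q' - I (p n)" unfolding I_def by (rule Bochner_Integration.integral_diff[OF iqW ipW])
    finally have "I q' - I (p n) = (\<integral>x. (q' x - p n x) * W x \<partial>M)" by simp
    also have "\<dots> \<le> (\<integral>x. real N * \<bar>q' x - p n x\<bar> + (if \<bar>W x\<bar> > real N then q' x * \<bar>W x\<bar> else 0) + (if \<bar>W x\<bar> > real N then p n x * \<bar>W x\<bar> else 0) \<partial>M)"
    proof (rule integral_mono)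
      show "integrable M (\<lambda>x. (q' x - p n x) * W x)"
        unfolding left_diff_distrib by (rule Bochner_Integration.integrable_diff[OF iqW ipW])
      show "integrable M (\<lambda>x. real N * \<bar>q' x - p n x\<bar> + (if \<bar>W x\<bar> > real N then q' x * \<bar>W x\<bar> else 0) + (if \<bar>W x\<bar> > real N then p n x * \<bar>W x\<bar> else 0))"
        by (intro Bochner_Integration.integrable_add Bochner_Integration.integrable_mult_right t1 t2 i1)
      fix x assume x: "x \<in> space M"
      show "(q' x - p n x) * W x \<le> real N * \<bar>q' x - p n x\<bar> + (if \<bar>W x\<bar> > real N then q' x * \<bar>W x\<bar> else 0) + (if \<bar>W x\<bar> > real N then p n x * \<bar>W x\<bar> else 0)"
        by (rule W_bound) (use D_nn[OF q'(1) x] D_nn[OF pD x] in auto)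
    qed
    also have "\<dots> = real N * (\<integral>x. \<bar>q' x - p n x\<bar> \<partial>M) + (\<integral>x. (if \<bar>W x\<bar> > real N then q' x * \<bar>W x\<bar> else 0) \<partial>M) + (\<integral>x. (if \<bar>W x\<bar> > real N then p n x * \<bar>W x\<bar> else 0) \<partial>M)"
      by (simp only: Bochner_Integration.integral_add[OF Bochner_Integration.integrable_add[OF Bochner_Integration.integrable_mult_right[OF i1] t1] t2]
             Bochner_Integration.integral_add[OF Bochner_Integration.integrable_mult_right[OF i1] t1] integral_mult_right_zero)
    also have "(\<integral>x. \<bar>q' x - p n x\<bar> \<partial>M) = (\<integral>x. \<bar>p n x - q' x\<bar> \<partial>M)" by (simp add: abs_minus_commute)
    finally have "I q' - I (p n) \<le> real N * (\<integral>x. \<bar>p n x - q' x\<bar> \<partial>M) + (\<integral>x. (if \<bar>W x\<bar> > real N then q' x * \<bar>W x\<bar> else 0) \<partial>M) + (\<integral>x. (if \<bar>W x\<bar> > real N then p n x * \<bar>W x\<bar> else 0) \<partial>M)" .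
    then show False using n1 n2 N[OF q'(1)] N[OF pD[of n]] pI[of n] \<epsilon>_def by linarith
  qed
  then show ?thesis using q'(1) unfolding I_def by blast
qed

end

theorem proposition5p2:
  fixes M :: "'a measure" and u :: "('a \<Rightarrow> real) \<Rightarrow> ereal" and W :: "'a \<Rightarrow> real"
  assumes "prob_space M"
    and "coherent_utility M u"
    and "L1_closed M (determining_set M u)"
    and "unif_integrable M (determining_set M u)"
    and "W \<in> L1s M (determining_set M u)"
  shows "extreme_measures M u (determining_set M u) W \<noteq> {}"
proof -
  have "setting M u W (determining_set M u)"
    unfolding setting_def setting_axioms_def using assms by auto
  then interpret setting M u W "determining_set M u" .
  obtain c where c: "u W = ereal c" "\<And>q. q \<in> determining_set M u \<Longrightarrow> c \<le> (\<integral>x. q x * W x \<partial>M)"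
    "\<And>e. 0 < e \<Longrightarrow> \<exists>q\<in>determining_set M u. (\<integral>x. q x * W x \<partial>M) < c + e"
    using c_props by blast
  obtain q where q: "q \<in> determining_set M u" "(\<integral>x. q x * W x \<partial>M) \<le> c"
    using attain[of c, OF c(2) c(3)] by blast
  have "(\<integral>x. q x * W x \<partial>M) = c" using c(2)[OF q(1)] q(2) by simp
  moreover have "EQ M q W = ereal (\<integral>x. q x * W x \<partial>M)"
    by (rule EQ_real[OF D_dens[OF q(1)] W_meas intW[OF q(1)]])
  ultimately have "EQ M q W = u W" using c(1) by simp
  then have "q \<in> extreme_measures M u (determining_set M u) W"
    unfolding extreme_measures_def using q(1) c(1) by simp
  then show ?thesis by blast
qed

end
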